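(* Let $X \subset \mathbb{Z}^n$ and let $(X,d,c_1)$ be a digital metric space that is $c_1$-connected, where $d$ is any $\ell_p$ metric on $\mathbb{Z}^n$ ($1 \le p \le \infty$). Let $f: X \to X$ be a digital contraction map. Then $f$ is a constant function.
   Context: For $p,q \in \mathbb{Z}^n$, $p \neq q$, and $1 \le u \le n$, $p$ and $q$ are $c_u$-adjacent if $|p_i - q_i| = 1$ for at most $u$ indices $i$ and $p_j = q_j$ for all other indices $j$. A digital metric space is a triple $(X,d,\kappa)$ with $X\subset\mathbb{Z}^n$, $\kappa$ an adjacency on $X$ and $d$ a metric on $X$. The $\ell_p$ metric is $d(x,y) = (\sum_{i=1}^n |x_i-y_i|^p)^{1/p}$ for $1 \le p<\infty$ and $d(x,y) = \max_i |x_i - y_i|$ for $p=\infty$. $X$ is $c_1$-connected if any two points are joined by a finite sequence of points of $X$ with consecutive points equal or $c_1$-adjacent. $f$ is a digital contraction map if there is $\alpha \in (0,1)$ with $d(f(x),f(y)) \le \alpha\, d(x,y)$ for all $x,y \in X$. *)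

theory Defs
  imports "HOL-Analysis.Analysis" "HOL-Library.Extended_Real"
begin

text \<open>Points of Z^n are vectors int^'n, for a finite index type 'n with CARD('n) = n.\<close>

definition lp_dist :: "ereal \<Rightarrow> int^'n \<Rightarrow> int^'n \<Rightarrow> real" where
  "lp_dist p x y =
     (if p = \<infinity> then Max (range (\<lambda>i. real_of_int \<bar>x$i - y$i\<bar>))
      else (\<Sum>i\<in>UNIV. real_of_int \<bar>x$i - y$i\<bar> powr real_of_ereal p) powr (1 / real_of_ereal p))"

definition c_adj :: "nat \<Rightarrow> int^'n \<Rightarrow> int^'n \<Rightarrow> bool" where
  "c_adj u p q \<longleftrightarrow> p \<noteq> q \<and> card {i. \<bar>p$i - q$i\<bar> = 1} \<le> u
      \<and> (\<forall>j. \<bar>p$j - q$j\<bar> \<noteq> 1 \<longrightarrow> p$j = q$j)"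

definition adj_connected :: "('a \<Rightarrow> 'a \<Rightarrow> bool) \<Rightarrow> 'a set \<Rightarrow> bool" where
  "adj_connected \<kappa> X \<longleftrightarrow>
     (\<forall>x\<in>X. \<forall>y\<in>X. \<exists>ps. ps \<noteq> [] \<and> hd ps = x \<and> last ps = y \<and> set ps \<subseteq> X \<and>
        (\<forall>i. Suc i < length ps \<longrightarrow> ps!i = ps!Suc i \<or> \<kappa> (ps!i) (ps!Suc i)))"

definition digital_contraction :: "('a \<Rightarrow> 'a \<Rightarrow> real) \<Rightarrow> 'a set \<Rightarrow> ('a \<Rightarrow> 'a) \<Rightarrow> bool" where
  "digital_contraction d X f \<longleftrightarrow>
     (\<exists>\<alpha>::real. 0 < \<alpha> \<and> \<alpha> < 1 \<and> (\<forall>x\<in>X. \<forall>y\<in>X. d (f x) (f y) \<le> \<alpha> * d x y))"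

end

theory Submission
  imports Defs
begin

lemma lp_ge1:
  fixes x y :: "int^'n" and p :: ereal
  assumes "1 \<le> p" "x \<noteq> y"
  shows "1 \<le> lp_dist p x y"
proof -
  obtain i where i: "x$i \<noteq> y$i" using assms(2) by (metis vec_eq_iff)
  hence i1: "1 \<le> real_of_int \<bar>x$i - y$i\<bar>" by linarith
  show ?thesis
  proof (cases "p = \<infinity>")
    case True
    have "real_of_int \<bar>x$i - y$i\<bar> \<le> Max (range (\<lambda>i. real_of_int \<bar>x$i - y$i\<bar>))"
      by (rule Max_ge) auto
    moreover have "lp_dist p x y = Max (range (\<lambda>i. real_of_int \<bar>x$i - y$i\<bar>))"
      using True unfolding lp_dist_def by (simp only: if_True refl)
    ultimately show ?thesis using i1 by linarith
  next
    case False
    define r where "r = real_of_ereal p"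
    have r1: "1 \<le> r" using assms(1) False unfolding r_def
      by (cases p) auto
    have "1 \<le> real_of_int \<bar>x$i - y$i\<bar> powr r"
      using i1 r1 by (simp add: ge_one_powr_ge_zero)
    also have "\<dots> \<le> (\<Sum>j\<in>UNIV. real_of_int \<bar>x$j - y$j\<bar> powr r)"
      by (rule member_le_sum) auto
    finally have S: "1 \<le> (\<Sum>j\<in>UNIV. real_of_int \<bar>x$j - y$j\<bar> powr r)" .
    have "1 \<le> (\<Sum>j\<in>UNIV. real_of_int \<bar>x$j - y$j\<bar> powr r) powr (1/r)"
      using S r1 by (simp add: ge_one_powr_ge_zero)
    then show ?thesis using False by (simp add: lp_dist_def r_def)
  qed
qed

lemma lp_le1:
  fixes x y :: "int^'n" and p :: ereal
  assumes "1 \<le> p" "c_adj 1 x y"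
  shows "lp_dist p x y \<le> 1"
proof -
  have c: "card {i. \<bar>x$i - y$i\<bar> = 1} \<le> 1"
    and z: "\<And>j. \<bar>x$j - y$j\<bar> \<noteq> 1 \<Longrightarrow> x$j = y$j"
    using assms(2) unfolding c_adj_def by auto
  have t1: "real_of_int \<bar>x$j - y$j\<bar> \<le> 1" for j
    using z[of j] by (cases "\<bar>x$j - y$j\<bar> = 1") auto
  show ?thesis
  proof (cases "p = \<infinity>")
    case True
    have "Max (range (\<lambda>i. real_of_int \<bar>x$i - y$i\<bar>)) \<le> 1"
      using t1 by (subst Max_le_iff) auto
    moreover have "lp_dist p x y = Max (range (\<lambda>i. real_of_int \<bar>x$i - y$i\<bar>))"
      using True unfolding lp_dist_def by (simp only: if_True refl)
    ultimately show ?thesis by linarith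
  next
    case False
    define r where "r = real_of_ereal p"
    have r1: "1 \<le> r" using assms(1) False unfolding r_def
      by (cases p) auto
    define A where "A = {i. \<bar>x$i - y$i\<bar> = 1}"
    have tm: "real_of_int \<bar>x$j - y$j\<bar> powr r = (if j \<in> A then 1 else 0)" for j
    proof (cases "\<bar>x$j - y$j\<bar> = 1")
      case True
      hence "real_of_int \<bar>x$j - y$j\<bar> = 1" by simp
      then show ?thesis using True by (simp add: A_def)
    next
      case False
      then show ?thesis using z[of j] by (simp add: A_def)
    qed
    have "(\<Sum>j\<in>UNIV. real_of_int \<bar>x$j - y$j\<bar> powr r) = real (card A)"
      unfolding tm by (simp add: sum.If_cases)
    also have "\<dots> \<le> 1" using c A_def by simp
    finally have S: "(\<Sum>j\<in>UNIV. real_of_int \<bar>x$j - y$j\<bar> powr r) \<le> 1" .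
    have "(\<Sum>j\<in>UNIV. real_of_int \<bar>x$j - y$j\<bar> powr r) powr (1/r) \<le> 1 powr (1/r)"
      by (rule powr_mono2) (use S r1 in \<open>auto intro: sum_nonneg\<close>)
    then show ?thesis using False by (simp add: lp_dist_def r_def)
  qed
qed

theorem mainTheorem4:
  fixes X :: "(int^'n) set" and f :: "int^'n \<Rightarrow> int^'n" and p :: ereal
  assumes "1 \<le> p"
    and "adj_connected (c_adj 1) X"
    and "f ` X \<subseteq> X"
    and "digital_contraction (lp_dist p) X f"
  shows "\<exists>c. \<forall>x\<in>X. f x = c"
proof -
  obtain \<alpha> where a: "0 < \<alpha>" "\<alpha> < 1" "\<forall>x\<in>X. \<forall>y\<in>X. lp_dist p (f x) (f y) \<le> \<alpha> * lp_dist p x y"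
    using assms(4) unfolding digital_contraction_def by auto
  have adj: "f x = f y" if "x \<in> X" "y \<in> X" "x = y \<or> c_adj 1 x y" for x y
  proof (rule ccontr)
    assume ne: "f x \<noteq> f y"
    hence xy: "c_adj 1 x y" using that by auto
    have "1 \<le> lp_dist p (f x) (f y)" using lp_ge1[OF assms(1) ne] .
    also have "\<dots> \<le> \<alpha> * lp_dist p x y" using a(3) that(1,2) by blast
    also have "\<dots> \<le> \<alpha>" using lp_le1[OF assms(1) xy] a(1) mult_left_mono[of "lp_dist p x y" 1 \<alpha>] by simp
    finally show False using a by simp
  qed
  have path: "f x = f y" if xyX: "x \<in> X" "y \<in> X" for x y
  proof -
    obtain ps where ps: "ps \<noteq> []" "hd ps = x" "last ps = y" "set ps \<subseteq> X"
      "\<forall>i. Suc i < length ps \<longrightarrow> ps!i = ps!Suc i \<or> c_adj 1 (ps!i) (ps!Suc i)"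
      using assms(2)[unfolded adj_connected_def, rule_format, OF xyX] by (elim exE conjE) simp
    have "i < length ps \<Longrightarrow> f (ps!i) = f (ps!0)" for i
    proof (induction i)
      case 0 then show ?case by simp
    next
      case (Suc i)
      have "f (ps!i) = f (ps!Suc i)"
        proof (rule adj)
          show "ps!i \<in> X" using Suc.prems ps(4) nth_mem[of i ps] by auto
          show "ps!Suc i \<in> X" using Suc.prems ps(4) nth_mem[of "Suc i" ps] by auto
          show "ps!i = ps!Suc i \<or> c_adj 1 (ps!i) (ps!Suc i)" using Suc.prems ps(5) by blast
        qed
      then show ?case using Suc by simp
    qed
    from this[of "length ps - 1"] ps show ?thesis
      by (simp add: hd_conv_nth last_conv_nth)
  qed
  show ?thesis
  proof (cases "X = {}")
    case True then show ?thesis by auto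
  next
    case False
    then obtain x0 where "x0 \<in> X" by auto
    then show ?thesis using path by blast
  qed
qed

end
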